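(* Let $M^*\in[0,1]^{n_1\times n_2}$. For any fixed matrix $A\in\mathbb R^{n_1\times n_2}$ and scalar $u\ge0$, \[ |\langle Y-M^*,A\rangle|\le2(\zeta+1)\Big(\sqrt{e-1}\,\|A\|_F\sqrt{\frac{n_1n_2}{N}u}+\|A\|_\infty\frac{n_1n_2}{N}u\Big) \] with probability at least $1-4e^{-u}$. Consequently, for any nonempty subset $\mathcal S\subset[n_1]\times[n_2]$, \[ \Big|\sum_{(i,j)\in\mathcal S}(Y_{i,j}-M^*_{i,j})\Big|\le8(\zeta+1)\Big(\sqrt{\frac{|\mathcal S|n_1n_2}{N}\log(n_1n_2)}+\frac{n_1n_2}{N}\log(n_1n_2)\Big) \] with probability at least $1-4(n_1n_2)^{-4}$.
   Context: Observation model: fix $N>0$. Draw $N'\sim\mathrm{Poi}(N)$ independently of everything else, then $N'$ independent pairs $(X_\ell,y_\ell)$ with $X_\ell$ uniform on $\{E^{(i,j)}:i\in[n_1],j\in[n_2]\}$ ($E^{(i,j)}$ has $1$ in entry $(i,j)$ and $0$ elsewhere) and $y_\ell=\mathrm{trace}(X_\ell^\top M^* )+z_\ell$, where $z_\ell$ are independent, zero-mean, with $\mathbb{E}\exp(sz_\ell)\le\exp(\zeta^2s^2)$ for all $|s|\le1/\zeta$ ($\zeta>0$). $Y_{i,j}=\frac{n_1n_2}{N}\sum_{\ell=1}^{N'}y_\ell\mathbf 1\{X_\ell=E^{(i,j)}\}$. $\langle A,B\rangle=\mathrm{trace}(A^\top B)$; $\|A\|_\infty=\max_{i,j}|A_{i,j}|$;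 logarithms natural. *)

theory Defs
  imports "HOL-Probability.Probability"
begin

text \<open>Index set [n1] x [n2], 0-based: entry (i,j) with i < n1, j < n2.
  Matrices in R^{n1 x n2} are functions nat => nat => real, only entries on the grid matter.\<close>
definition grid :: "nat \<Rightarrow> nat \<Rightarrow> (nat \<times> nat) set" where
  "grid n1 n2 = {0..<n1} \<times> {0..<n2}"

text \<open>An outcome is (N', w) where N' is the
  Poisson(N) count and w l = (X_l, z_l) gives the sampled location X_l (uniform on the grid,
  encoding E^{(i,j)} by (i,j)) and the noise z_l (law D l).\<close>
definition obs_space :: "real \<Rightarrow> nat \<Rightarrow> nat \<Rightarrow> (nat \<Rightarrow> real measure)
    \<Rightarrow> (nat \<times> (nat \<Rightarrow> (nat \<times> nat) \<times> real)) measure" where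
  "obs_space N n1 n2 D =
     measure_pmf (poisson_pmf N) \<Otimes>\<^sub>M
     (\<Pi>\<^sub>M l\<in>UNIV. measure_pmf (pmf_of_set (grid n1 n2)) \<Otimes>\<^sub>M D l)"

text \<open>y_l = trace(X_l^T M*) + z_l = M*_{X_l} + z_l, and
  Y_{i,j} = (n1 n2 / N) * sum_{l < N'} y_l 1{X_l = E^{(i,j)}}.\<close>
definition Yobs :: "real \<Rightarrow> nat \<Rightarrow> nat \<Rightarrow> (nat \<Rightarrow> nat \<Rightarrow> real)
    \<Rightarrow> nat \<times> (nat \<Rightarrow> (nat \<times> nat) \<times> real) \<Rightarrow> nat \<Rightarrow> nat \<Rightarrow> real" where
  "Yobs N n1 n2 Mstar \<omega> i j =
     (real n1 * real n2 / N) *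
     (\<Sum>l<fst \<omega>. (if fst (snd \<omega> l) = (i, j)
                    then Mstar (fst (fst (snd \<omega> l))) (snd (fst (snd \<omega> l))) + snd (snd \<omega> l)
                    else 0))"

definition frob_norm :: "nat \<Rightarrow> nat \<Rightarrow> (nat \<Rightarrow> nat \<Rightarrow> real) \<Rightarrow> real" where
  "frob_norm n1 n2 A = sqrt (\<Sum>(i,j)\<in>grid n1 n2. (A i j)\<^sup>2)"

definition max_norm :: "nat \<Rightarrow> nat \<Rightarrow> (nat \<Rightarrow> nat \<Rightarrow> real) \<Rightarrow> real" where
  "max_norm n1 n2 A = Max ((\<lambda>(i,j). \<bar>A i j\<bar>) ` grid n1 n2)"

definition mat_inner :: "nat \<Rightarrow> nat \<Rightarrow> (nat \<Rightarrow> nat \<Rightarrow> real) \<Rightarrow> (nat \<Rightarrow> nat \<Rightarrow> real) \<Rightarrow> real" where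
  "mat_inner n1 n2 B A = (\<Sum>(i,j)\<in>grid n1 n2. B i j * A i j)"

definition noise_ok :: "real \<Rightarrow> real measure \<Rightarrow> bool" where
  "noise_ok \<zeta> D \<longleftrightarrow> prob_space D \<and> sets D = sets borel \<and>
     integrable D (\<lambda>z. z) \<and> (\<integral>z. z \<partial>D) = 0 \<and>
     (\<forall>s. \<bar>s\<bar> \<le> 1 / \<zeta> \<longrightarrow>
        integrable D (\<lambda>z. exp (s * z)) \<and> (\<integral>z. exp (s * z) \<partial>D) \<le> exp (\<zeta>\<^sup>2 * s\<^sup>2))"

end

theory Submission
  imports Defs
begin

lemma exp_quad_bound:
  fixes w :: real assumes w: "\<bar>w\<bar> \<le> 1/2"
  shows "exp w \<le> 1 + w + (2/3) * w\<^sup>2"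
proof -
  obtain t where t: "\<bar>t\<bar> \<le> \<bar>w\<bar>" and e: "exp w = (\<Sum>m<3. w ^ m / fact m) + exp t / fact 3 * w ^ 3"
    using Maclaurin_exp_le[of w 3] by blast
  have s: "(\<Sum>m<3. w ^ m / fact m) = 1 + w + w\<^sup>2 / 2"
    by (simp add: eval_nat_numeral fact_numeral)
  have "exp t \<le> exp (1/2)" using t w by simp
  also have "exp (1/2::real) \<le> 2"
  proof -
    have "exp (1/2::real) * exp (1/2) = exp 1" by (simp flip: exp_add)
    also have "\<dots> \<le> 3" by (rule exp_le)
    finally have "exp (1/2::real) * exp (1/2) \<le> 3" .
    show ?thesis
    proof (rule ccontr)
      assume "\<not> exp (1/2::real) \<le> 2"
      then have "2 * 2 < exp (1/2::real) * exp (1/2)"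
        by (intro mult_strict_mono) auto
      with \<open>exp (1/2::real) * exp (1/2) \<le> 3\<close> show False by simp
    qed
  qed
  finally have et: "exp t \<le> 2" .
  have "exp t / fact 3 * w ^ 3 \<le> \<bar>exp t / fact 3 * w ^ 3\<bar>" by (rule abs_ge_self)
  also have "\<dots> = exp t / 6 * (\<bar>w\<bar> * w\<^sup>2)" by (simp add: fact_numeral abs_mult power_abs eval_nat_numeral)
  also have "\<dots> \<le> 2 / 6 * (1/2 * w\<^sup>2)"
  proof (rule mult_mono)
    show "exp t / 6 \<le> 2 / 6" using et by simp
    show "\<bar>w\<bar> * w\<^sup>2 \<le> 1/2 * w\<^sup>2" using w by (intro mult_right_mono) auto
  qed auto
  finally have "exp t / fact 3 * w ^ 3 \<le> w\<^sup>2 / 6" by simp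
  then show ?thesis using e s by simp
qed

lemma exp1_ge: "exp 1 \<ge> (8/3::real)"
proof -
  obtain t where e: "exp (1::real) = (\<Sum>m<4. 1 ^ m / fact m) + exp t / fact 4 * 1 ^ 4"
    using Maclaurin_exp_le[of 1 4] by blast
  have "(\<Sum>m<4. (1::real) ^ m / fact m) = 8/3"
    by (simp add: eval_nat_numeral fact_numeral)
  moreover have "exp t / fact 4 * 1 ^ 4 \<ge> (0::real)" by simp
  ultimately show ?thesis using e by linarith
qed

definition gfun :: "nat \<Rightarrow> nat \<Rightarrow> (nat \<times> nat \<Rightarrow> real) \<Rightarrow> (nat \<times> nat \<Rightarrow> real) \<Rightarrow> (nat \<times> nat) \<times> real \<Rightarrow> real" where
  "gfun n1 n2 h k p = (if fst p \<in> grid n1 n2 then h (fst p) + k (fst p) * snd p else 0)"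

lemma gfun_meas: "gfun n1 n2 h k \<in> borel_measurable (count_space UNIV \<Otimes>\<^sub>M borel)"
  unfolding gfun_def by measurable

lemma gfun_meas': assumes "sets D = sets borel"
  shows "gfun n1 n2 h k \<in> borel_measurable (measure_pmf p \<Otimes>\<^sub>M D)"
proof -
  have "sets (measure_pmf p \<Otimes>\<^sub>M D) = sets (count_space UNIV \<Otimes>\<^sub>M borel)"
    by (intro sets_pair_measure_cong) (auto simp: assms)
  note eq = this
  show ?thesis by (subst measurable_cong_sets[OF eq refl]) (rule gfun_meas)
qed

lemma finite_grid: "finite (grid n1 n2)" by (simp add: grid_def)
lemma card_grid: "card (grid n1 n2) = n1 * n2" by (simp add: grid_def)

lemma sample_mgf:
  assumes nz: "noise_ok \<zeta> D" and zeta: "\<zeta> > 0" and n: "n1 > 0" "n2 > 0"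
    and sk: "\<And>x. x \<in> grid n1 n2 \<Longrightarrow> \<bar>s * k x\<bar> \<le> 1 / \<zeta>"
  shows "(\<integral>\<^sup>+ p. ennreal (exp (s * gfun n1 n2 h k p)) \<partial>(measure_pmf (pmf_of_set (grid n1 n2)) \<Otimes>\<^sub>M D))
     \<le> ennreal ((\<Sum>x\<in>grid n1 n2. exp (s * h x + \<zeta>\<^sup>2 * (s * k x)\<^sup>2)) / real (card (grid n1 n2)))"
proof -
  let ?G = "grid n1 n2"
  let ?p = "pmf_of_set ?G"
  have Gne: "?G \<noteq> {}" using n by (auto simp: grid_def)
  have psD: "prob_space D" and sD: "sets D = sets borel" using nz by (auto simp: noise_ok_def)
  interpret D: prob_space D by (rule psD)
  have meas: "(\<lambda>p. ennreal (exp (s * gfun n1 n2 h k p))) \<in> borel_measurable (measure_pmf ?p \<Otimes>\<^sub>M D)"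
    using gfun_meas'[OF sD] by measurable
  have inner: "(\<integral>\<^sup>+ z. ennreal (exp (s * gfun n1 n2 h k (x, z))) \<partial>D) \<le> ennreal (exp (s * h x + \<zeta>\<^sup>2 * (s * k x)\<^sup>2))"
    if x: "x \<in> ?G" for x
  proof -
    have ok: "integrable D (\<lambda>z. exp ((s * k x) * z)) \<and> (\<integral>z. exp ((s * k x) * z) \<partial>D) \<le> exp (\<zeta>\<^sup>2 * (s * k x)\<^sup>2)"
      using nz sk[OF x] unfolding noise_ok_def by blast
    have mz[measurable]: "(\<lambda>z. exp ((s * k x) * z)) \<in> borel_measurable D"
      by (subst measurable_cong_sets[OF sD refl]) measurable
    have "(\<integral>\<^sup>+ z. ennreal (exp (s * gfun n1 n2 h k (x, z))) \<partial>D)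
        = (\<integral>\<^sup>+ z. ennreal (exp (s * h x)) * ennreal (exp ((s * k x) * z)) \<partial>D)"
      using x by (intro nn_integral_cong) (simp add: gfun_def ennreal_mult' distrib_left mult.assoc exp_add)
    also have "\<dots> = ennreal (exp (s * h x)) * (\<integral>\<^sup>+ z. ennreal (exp ((s * k x) * z)) \<partial>D)"
      by (rule nn_integral_cmult) measurable
    also have "(\<integral>\<^sup>+ z. ennreal (exp ((s * k x) * z)) \<partial>D) = ennreal (\<integral>z. exp ((s * k x) * z) \<partial>D)"
      using ok by (intro nn_integral_eq_integral) auto
    also have "ennreal (exp (s * h x)) * ennreal (\<integral>z. exp ((s * k x) * z) \<partial>D)
        \<le> ennreal (exp (s * h x)) * ennreal (exp (\<zeta>\<^sup>2 * (s * k x)\<^sup>2))"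
      using ok by (intro mult_left_mono ennreal_leI) auto
    also have "\<dots> = ennreal (exp (s * h x + \<zeta>\<^sup>2 * (s * k x)\<^sup>2))"
      by (simp add: ennreal_mult' exp_add)
    finally show ?thesis .
  qed
  have "(\<integral>\<^sup>+ p. ennreal (exp (s * gfun n1 n2 h k p)) \<partial>(measure_pmf ?p \<Otimes>\<^sub>M D))
      = (\<integral>\<^sup>+ x. (\<integral>\<^sup>+ z. ennreal (exp (s * gfun n1 n2 h k (x, z))) \<partial>D) \<partial>measure_pmf ?p)"
    using D.nn_integral_fst[OF meas] by simp
  also have "\<dots> = (\<Sum>x\<in>?G. (\<integral>\<^sup>+ z. ennreal (exp (s * gfun n1 n2 h k (x, z))) \<partial>D) * pmf ?p x)"
    using Gne finite_grid[of n1 n2] by (subst nn_integral_measure_pmf_finite) auto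
  also have "\<dots> \<le> (\<Sum>x\<in>?G. ennreal (exp (s * h x + \<zeta>\<^sup>2 * (s * k x)\<^sup>2)) * ennreal (1 / real (card ?G)))"
  proof (rule sum_mono)
    fix x assume x: "x \<in> ?G"
    have "pmf ?p x = 1 / real (card ?G)" using x Gne finite_grid[of n1 n2] by simp
    then show "(\<integral>\<^sup>+ z. ennreal (exp (s * gfun n1 n2 h k (x, z))) \<partial>D) * ennreal (pmf ?p x)
       \<le> ennreal (exp (s * h x + \<zeta>\<^sup>2 * (s * k x)\<^sup>2)) * ennreal (1 / real (card ?G))"
      using inner[OF x] by (simp add: mult_right_mono)
  qed
  also have "\<dots> = ennreal (\<Sum>x\<in>?G. exp (s * h x + \<zeta>\<^sup>2 * (s * k x)\<^sup>2) * (1 / real (card ?G)))"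
    by (subst sum_ennreal[symmetric]) (simp_all add: ennreal_mult''[symmetric])
  also have "\<dots> = ennreal ((\<Sum>x\<in>?G. exp (s * h x + \<zeta>\<^sup>2 * (s * k x)\<^sup>2)) / real (card ?G))"
    by (simp add: sum_divide_distrib)
  finally show ?thesis .
qed

lemma PiM_prod_bound:
  fixes Ml :: "nat \<Rightarrow> 'a measure" and g :: "'a \<Rightarrow> real"
  assumes ps: "\<And>l. prob_space (Ml l)" and gm: "\<And>l. g \<in> borel_measurable (Ml l)"
    and b: "\<And>l. (\<integral>\<^sup>+ p. ennreal (exp (s * g p)) \<partial>Ml l) \<le> ennreal \<phi>"
  shows "(\<integral>\<^sup>+ w. ennreal (exp (s * (\<Sum>l<n. g (w l)))) \<partial>PiM UNIV Ml) \<le> ennreal \<phi> ^ n"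
proof -
  interpret product_prob_space Ml UNIV
    by (simp add: product_prob_space_def product_sigma_finite_def product_prob_space_axioms_def
        ps prob_space_imp_sigma_finite)
  let ?J = "{..<n::nat}"
  let ?F = "\<lambda>v. (\<Prod>l\<in>?J. ennreal (exp (s * g (v l))))"
  have fm: "(\<lambda>p. ennreal (exp (s * g p))) \<in> borel_measurable (Ml l)" for l
    using gm[of l] by measurable
  have Fm: "?F \<in> borel_measurable (PiM ?J Ml)"
  proof (rule borel_measurable_prod_ennreal)
    fix l assume "l \<in> ?J"
    show "(\<lambda>v. ennreal (exp (s * g (v l)))) \<in> borel_measurable (PiM ?J Ml)"
      by (rule measurable_compose[OF measurable_component_singleton[OF \<open>l \<in> ?J\<close>, of Ml] fm[of l]])
  qed
  have "(\<integral>\<^sup>+ w. ennreal (exp (s * (\<Sum>l<n. g (w l)))) \<partial>PiM UNIV Ml)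
      = (\<integral>\<^sup>+ w. ?F (restrict w ?J) \<partial>PiM UNIV Ml)"
    by (intro nn_integral_cong) (simp add: sum_distrib_left exp_sum prod_ennreal)
  also have "\<dots> = (\<integral>\<^sup>+ v. ?F v \<partial>distr (PiM UNIV Ml) (PiM ?J Ml) (\<lambda>x. restrict x ?J))"
    by (rule nn_integral_distr[symmetric], rule measurable_restrict_subset, simp) (simp add: Fm)
  also have "distr (PiM UNIV Ml) (PiM ?J Ml) (\<lambda>x. restrict x ?J) = PiM ?J Ml"
    by (rule distr_PiM_restrict_finite) auto
  also have "(\<integral>\<^sup>+ v. ?F v \<partial>PiM ?J Ml) = (\<Prod>l\<in>?J. (\<integral>\<^sup>+ p. ennreal (exp (s * g p)) \<partial>Ml l))"
    by (rule product_nn_integral_prod) (simp_all add: fm)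
  also have "\<dots> \<le> (\<Prod>l\<in>?J. ennreal \<phi>)"
    by (rule prod_mono_ennreal) (rule b)
  also have "\<dots> = ennreal \<phi> ^ n" by simp
  finally show ?thesis .
qed

lemma poisson_mgf:
  fixes N \<phi> :: real assumes N: "N > 0" and phi: "\<phi> \<ge> 0"
  shows "(\<integral>\<^sup>+ n. ennreal \<phi> ^ n \<partial>measure_pmf (poisson_pmf N)) = ennreal (exp (N * (\<phi> - 1)))"
proof -
  have s0: "(\<lambda>n. (N * \<phi>) ^ n /\<^sub>R fact n) sums exp (N * \<phi>)" by (rule exp_converges)
  have e: "(N * \<phi>) ^ n /\<^sub>R fact n = (N * \<phi>) ^ n / fact n" for n
    by (simp add: divide_inverse mult.commute)
  have s: "(\<lambda>n. (N * \<phi>) ^ n / fact n * exp (- N)) sums (exp (N * \<phi>) * exp (- N))"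
    using sums_mult2[OF s0, of "exp (- N)"] unfolding e .
  have t: "ennreal (pmf (poisson_pmf N) n) * ennreal \<phi> ^ n = ennreal ((N * \<phi>) ^ n / fact n * exp (- N))" for n
  proof -
    have "ennreal (pmf (poisson_pmf N) n) * ennreal \<phi> ^ n = ennreal (N ^ n / fact n * exp (- N)) * ennreal (\<phi> ^ n)"
      using N phi by (simp add: ennreal_power)
    also have "\<dots> = ennreal (N ^ n / fact n * exp (- N) * \<phi> ^ n)"
      using N phi by (intro ennreal_mult[symmetric]) auto
    also have "N ^ n / fact n * exp (- N) * \<phi> ^ n = (N * \<phi>) ^ n / fact n * exp (- N)"
      by (simp add: power_mult_distrib)
    finally show ?thesis .
  qed
  have "(\<integral>\<^sup>+ n. ennreal \<phi> ^ n \<partial>measure_pmf (poisson_pmf N))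
      = (\<integral>\<^sup>+ n. ennreal (pmf (poisson_pmf N) n) * ennreal \<phi> ^ n \<partial>count_space UNIV)"
    by (rule nn_integral_measure_pmf)
  also have "\<dots> = (\<Sum>n. ennreal ((N * \<phi>) ^ n / fact n * exp (- N)))"
    unfolding nn_integral_count_space_nat t ..
  also have "\<dots> = ennreal (exp (N * \<phi>) * exp (- N))"
    by (rule suminf_ennreal_eq[OF _ s]) (use N phi in simp)
  also have "exp (N * \<phi>) * exp (- N) = exp (N * (\<phi> - 1))"
    by (simp add: right_diff_distrib flip: exp_add)
  finally show ?thesis .
qed

lemma pw_bound:
  fixes \<mu> \<beta> \<zeta> :: real
  assumes mu: "\<bar>\<mu>\<bar> \<le> 1" and z: "\<zeta> > 0" and b: "\<bar>\<beta>\<bar> * (1 + \<zeta>) \<le> 1/2"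
  shows "exp (\<mu> * \<beta> + \<zeta>\<^sup>2 * \<beta>\<^sup>2) - 1 - \<mu> * \<beta> \<le> (exp 1 - 1) * (1 + \<zeta>)\<^sup>2 * \<beta>\<^sup>2"
proof -
  define w where "w = \<mu> * \<beta> + \<zeta>\<^sup>2 * \<beta>\<^sup>2"
  have "\<bar>\<beta>\<bar> * (1 + \<zeta>) = \<bar>\<beta>\<bar> + \<zeta> * \<bar>\<beta>\<bar>" by (simp add: algebra_simps)
  then have zb: "\<zeta> * \<bar>\<beta>\<bar> \<le> 1/2" using b by simp
  have "\<bar>\<mu> * \<beta>\<bar> \<le> \<bar>\<beta>\<bar>" using mu by (simp add: abs_mult mult_left_le_one_le)
  moreover have "\<zeta>\<^sup>2 * \<beta>\<^sup>2 = (\<zeta> * \<bar>\<beta>\<bar>) * (\<zeta> * \<bar>\<beta>\<bar>)" by (simp add: power2_eq_square)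
  moreover have "(\<zeta> * \<bar>\<beta>\<bar>) * (\<zeta> * \<bar>\<beta>\<bar>) \<le> \<zeta> * \<bar>\<beta>\<bar>"
    using zb z by (intro mult_left_le_one_le) auto
  moreover have "\<bar>w\<bar> \<le> \<bar>\<mu> * \<beta>\<bar> + \<zeta>\<^sup>2 * \<beta>\<^sup>2"
    unfolding w_def using abs_triangle_ineq[of "\<mu> * \<beta>" "\<zeta>\<^sup>2 * \<beta>\<^sup>2"] by simp
  moreover have "(1 + \<zeta>) * \<bar>\<beta>\<bar> = \<bar>\<beta>\<bar> + \<zeta> * \<bar>\<beta>\<bar>" by (simp add: algebra_simps)
  ultimately have wb: "\<bar>w\<bar> \<le> (1 + \<zeta>) * \<bar>\<beta>\<bar>" by linarith
  have w12: "\<bar>w\<bar> \<le> 1/2" using wb b by (simp add: mult.commute)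
  have "exp w \<le> 1 + w + (2/3) * w\<^sup>2" by (rule exp_quad_bound[OF w12])
  moreover have "w\<^sup>2 \<le> ((1 + \<zeta>) * \<bar>\<beta>\<bar>)\<^sup>2"
    using wb by (metis abs_ge_zero power2_abs power_mono)
  moreover have "((1 + \<zeta>) * \<bar>\<beta>\<bar>)\<^sup>2 = (1 + \<zeta>)\<^sup>2 * \<beta>\<^sup>2" by (simp add: power_mult_distrib)
  moreover have "\<zeta>\<^sup>2 * \<beta>\<^sup>2 \<le> (1 + \<zeta>)\<^sup>2 * \<beta>\<^sup>2"
    using z by (intro mult_right_mono power_mono) auto
  moreover have "(8/3 - 1) * ((1 + \<zeta>)\<^sup>2 * \<beta>\<^sup>2) \<le> (exp 1 - 1) * ((1 + \<zeta>)\<^sup>2 * \<beta>\<^sup>2)"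
    using exp1_ge by (intro mult_right_mono) auto
  ultimately show ?thesis unfolding w_def by (simp add: algebra_simps)
qed

lemma chernoff_choice:
  fixes V b u :: real
  assumes V: "V > 0" and b: "b > 0" and u: "u > 0"
  shows "\<exists>s>0. s \<le> 1 / b \<and> s\<^sup>2 * V - s * (2 * sqrt (V * u) + b * u) \<le> - u"
proof (cases "sqrt (u / V) \<le> 1 / b")
  case True
  define s where "s = sqrt (u / V)"
  have s0: "s > 0" using V u by (simp add: s_def)
  have "s\<^sup>2 * V = u" using V u by (simp add: s_def)
  moreover have "s * sqrt (V * u) = u"
    using V u by (simp add: s_def real_sqrt_mult[symmetric])
  moreover have "s * (b * u) \<ge> 0" using s0 b u by simp
  ultimately have "s\<^sup>2 * V - s * (2 * sqrt (V * u) + b * u) \<le> - u" by (simp add: algebra_simps)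
  then show ?thesis using True s0 by (intro exI[of _ s]) (simp add: s_def)
next
  case False
  define s where "s = 1 / b"
  have s0: "s > 0" using b by (simp add: s_def)
  have lt: "sqrt V * s < sqrt u"
    using False V b u by (simp add: s_def real_sqrt_divide field_simps)
  have "s\<^sup>2 * V = (sqrt V * s) * (sqrt V * s)" using V by (simp add: power2_eq_square)
  also have "\<dots> \<le> sqrt u * (sqrt V * s)" using lt s0 V by (intro mult_right_mono) auto
  also have "\<dots> = s * sqrt (V * u)" by (simp add: real_sqrt_mult)
  finally have "s\<^sup>2 * V \<le> s * sqrt (V * u)" .
  moreover have "s * (b * u) = u" using b by (simp add: s_def)
  moreover have "s * sqrt (V * u) \<ge> 0" using s0 V u by simp
  moreover have "s * (2 * sqrt (V * u) + b * u) = 2 * (s * sqrt (V * u)) + s * (b * u)"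
    by (simp add: algebra_simps)
  ultimately have "s\<^sup>2 * V - s * (2 * sqrt (V * u) + b * u) \<le> - u" by linarith
  then show ?thesis using s0 by (intro exI[of _ s]) (simp add: s_def)
qed

lemma W_identity:
  "mat_inner n1 n2 (\<lambda>i j. Yobs N n1 n2 M \<omega> i j - M i j) A
   = (\<Sum>l<fst \<omega>. gfun n1 n2 (\<lambda>x. (real n1 * real n2 / N) * M (fst x) (snd x) * A (fst x) (snd x))
        (\<lambda>x. (real n1 * real n2 / N) * A (fst x) (snd x)) (snd \<omega> l)) - mat_inner n1 n2 M A"
proof -
  define c where "c = real n1 * real n2 / N"
  define G where "G = grid n1 n2"
  define X where "X l = fst (snd \<omega> l)" for l
  define v where "v l = M (fst (X l)) (snd (X l)) + snd (snd \<omega> l)" for l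
  have fin: "finite G" by (simp add: G_def grid_def)
  have Y: "Yobs N n1 n2 M \<omega> i j = c * (\<Sum>l<fst \<omega>. (if X l = (i, j) then v l else 0))" for i j
    unfolding Yobs_def c_def X_def v_def by simp
  have "mat_inner n1 n2 (\<lambda>i j. Yobs N n1 n2 M \<omega> i j - M i j) A
      = (\<Sum>x\<in>G. c * (\<Sum>l<fst \<omega>. (if X l = x then v l else 0)) * A (fst x) (snd x)) - mat_inner n1 n2 M A"
    unfolding mat_inner_def G_def[symmetric] Y
    by (simp add: case_prod_unfold left_diff_distrib sum_subtractf)
  also have "(\<Sum>x\<in>G. c * (\<Sum>l<fst \<omega>. (if X l = x then v l else 0)) * A (fst x) (snd x))
      = (\<Sum>x\<in>G. \<Sum>l<fst \<omega>. (if X l = x then c * v l * A (fst (X l)) (snd (X l)) else 0))"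
    by (intro sum.cong refl) (simp add: sum_distrib_left sum_distrib_right if_distrib if_distribR cong: if_cong)
  also have "\<dots> = (\<Sum>l<fst \<omega>. \<Sum>x\<in>G. (if X l = x then c * v l * A (fst (X l)) (snd (X l)) else 0))"
    by (rule sum.swap)
  also have "\<dots> = (\<Sum>l<fst \<omega>. (if X l \<in> G then c * v l * A (fst (X l)) (snd (X l)) else 0))"
    using fin by (intro sum.cong refl) (simp add: sum.delta)
  also have "\<dots> = (\<Sum>l<fst \<omega>. gfun n1 n2 (\<lambda>x. c * M (fst x) (snd x) * A (fst x) (snd x))
        (\<lambda>x. c * A (fst x) (snd x)) (snd \<omega> l))"
    by (intro sum.cong refl) (simp add: gfun_def G_def X_def v_def algebra_simps)
  finally show ?thesis by (simp add: c_def)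
qed

lemma W_meas:
  assumes sD: "\<And>l. sets (D l) = sets borel"
  shows "(\<lambda>\<omega>. \<Sum>l<fst \<omega>. gfun n1 n2 h k (snd \<omega> l)) \<in> borel_measurable (obs_space N n1 n2 D)"
  unfolding obs_space_def
proof (rule measurable_compose_countable[where f = "\<lambda>n \<omega>. \<Sum>l<n. gfun n1 n2 h k (snd \<omega> l)" and g = fst])
  fix n :: nat
  show "(\<lambda>\<omega>. \<Sum>l<n. gfun n1 n2 h k (snd \<omega> l)) \<in> borel_measurable
      (measure_pmf (poisson_pmf N) \<Otimes>\<^sub>M (\<Pi>\<^sub>M l\<in>UNIV. measure_pmf (pmf_of_set (grid n1 n2)) \<Otimes>\<^sub>M D l))"
  proof (rule borel_measurable_sum)
    fix l assume "l \<in> {..<n}"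
    have c: "(\<lambda>\<omega>. snd \<omega> l) \<in> measurable (measure_pmf (poisson_pmf N) \<Otimes>\<^sub>M (\<Pi>\<^sub>M l\<in>UNIV. measure_pmf (pmf_of_set (grid n1 n2)) \<Otimes>\<^sub>M D l))
        (measure_pmf (pmf_of_set (grid n1 n2)) \<Otimes>\<^sub>M D l)"
      by (rule measurable_compose[OF measurable_snd measurable_component_singleton]) simp
    show "(\<lambda>\<omega>. gfun n1 n2 h k (snd \<omega> l)) \<in> borel_measurable
      (measure_pmf (poisson_pmf N) \<Otimes>\<^sub>M (\<Pi>\<^sub>M l\<in>UNIV. measure_pmf (pmf_of_set (grid n1 n2)) \<Otimes>\<^sub>M D l))"
      by (rule measurable_compose[OF c gfun_meas'[OF sD]])
  qed
next
  show "fst \<in> measurable (measure_pmf (poisson_pmf N) \<Otimes>\<^sub>M (\<Pi>\<^sub>M l\<in>UNIV. measure_pmf (pmf_of_set (grid n1 n2)) \<Otimes>\<^sub>M D l))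
      (count_space UNIV)"
  proof -
    have "id \<in> measurable (measure_pmf (poisson_pmf N)) (count_space UNIV)" by simp
    from measurable_compose[OF measurable_fst this]
    show ?thesis by (simp add: id_def)
  qed
qed

lemma mgf_total:
  assumes N: "N > 0" and z: "\<zeta> > 0" and n: "n1 > 0" "n2 > 0" and noise: "\<And>l. noise_ok \<zeta> (D l)"
    and sk: "\<And>x. x \<in> grid n1 n2 \<Longrightarrow> \<bar>s * k x\<bar> \<le> 1 / \<zeta>"
  shows "(\<integral>\<^sup>+ \<omega>. ennreal (exp (s * (\<Sum>l<fst \<omega>. gfun n1 n2 h k (snd \<omega> l)))) \<partial>obs_space N n1 n2 D)
     \<le> ennreal (exp (N * ((\<Sum>x\<in>grid n1 n2. exp (s * h x + \<zeta>\<^sup>2 * (s * k x)\<^sup>2)) / real (card (grid n1 n2)) - 1)))"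
proof -
  let ?Ml = "\<lambda>l. measure_pmf (pmf_of_set (grid n1 n2)) \<Otimes>\<^sub>M D l"
  let ?P = "PiM UNIV ?Ml"
  let ?poi = "measure_pmf (poisson_pmf N)"
  define \<phi> where "\<phi> = (\<Sum>x\<in>grid n1 n2. exp (s * h x + \<zeta>\<^sup>2 * (s * k x)\<^sup>2)) / real (card (grid n1 n2))"
  have phi0: "\<phi> \<ge> 0" unfolding \<phi>_def by (intro divide_nonneg_nonneg sum_nonneg) auto
  have sD: "\<And>l. sets (D l) = sets borel" and psD: "\<And>l. prob_space (D l)"
    using noise by (auto simp: noise_ok_def)
  have psM: "\<And>l. prob_space (?Ml l)"
    by (rule prob_space_pair) (simp_all add: prob_space_measure_pmf psD)
  interpret P: prob_space ?P by (rule prob_space_PiM) (rule psM)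
  have meas0: "(\<lambda>\<omega>. \<Sum>l<fst \<omega>. gfun n1 n2 h k (snd \<omega> l)) \<in> borel_measurable (?poi \<Otimes>\<^sub>M ?P)"
    using W_meas[OF sD, of n1 n2 h k N] unfolding obs_space_def .
  have meas: "(\<lambda>\<omega>. ennreal (exp (s * (\<Sum>l<fst \<omega>. gfun n1 n2 h k (snd \<omega> l))))) \<in> borel_measurable (?poi \<Otimes>\<^sub>M ?P)"
    using meas0 by measurable
  have "(\<integral>\<^sup>+ \<omega>. ennreal (exp (s * (\<Sum>l<fst \<omega>. gfun n1 n2 h k (snd \<omega> l)))) \<partial>obs_space N n1 n2 D)
      = (\<integral>\<^sup>+ n. (\<integral>\<^sup>+ w. ennreal (exp (s * (\<Sum>l<n. gfun n1 n2 h k (w l)))) \<partial>?P) \<partial>?poi)"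
    unfolding obs_space_def using P.nn_integral_fst[OF meas] by simp
  also have "\<dots> \<le> (\<integral>\<^sup>+ n. ennreal \<phi> ^ n \<partial>?poi)"
  proof (rule nn_integral_mono)
    fix n
    show "(\<integral>\<^sup>+ w. ennreal (exp (s * (\<Sum>l<n. gfun n1 n2 h k (w l)))) \<partial>?P) \<le> ennreal \<phi> ^ n"
    proof (rule PiM_prod_bound)
      show "\<And>l. prob_space (?Ml l)" by (rule psM)
      show "\<And>l. gfun n1 n2 h k \<in> borel_measurable (?Ml l)" by (rule gfun_meas'[OF sD])
      show "\<And>l. (\<integral>\<^sup>+ p. ennreal (exp (s * gfun n1 n2 h k p)) \<partial>?Ml l) \<le> ennreal \<phi>"
        unfolding \<phi>_def by (rule sample_mgf[OF noise z n sk])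
    qed
  qed
  also have "\<dots> = ennreal (exp (N * (\<phi> - 1)))" by (rule poisson_mgf[OF N phi0])
  finally show ?thesis unfolding \<phi>_def .
qed

lemma tail_one:
  fixes N \<zeta> :: real and n1 n2 :: nat and M :: "nat \<Rightarrow> nat \<Rightarrow> real" and D :: "nat \<Rightarrow> real measure"
    and A :: "nat \<Rightarrow> nat \<Rightarrow> real" and u :: real
  assumes N: "N > 0" and z: "\<zeta> > 0" and n: "n1 > 0" "n2 > 0"
    and Mr: "\<And>i j. (i, j) \<in> grid n1 n2 \<Longrightarrow> M i j \<in> {0..1}"
    and noise: "\<And>l. noise_ok \<zeta> (D l)"
    and u: "u > 0" and a: "max_norm n1 n2 A > 0"
  shows "measure (obs_space N n1 n2 D)
     {\<omega> \<in> space (obs_space N n1 n2 D).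
        2 * (\<zeta> + 1) * (sqrt (exp 1 - 1) * frob_norm n1 n2 A * sqrt (real n1 * real n2 / N * u)
           + max_norm n1 n2 A * (real n1 * real n2 / N) * u)
        \<le> mat_inner n1 n2 (\<lambda>i j. Yobs N n1 n2 M \<omega> i j - M i j) A} \<le> exp (- u)"
proof -
  define \<Omega> where "\<Omega> = obs_space N n1 n2 D"
  define G where "G = grid n1 n2"
  define c where "c = real n1 * real n2 / N"
  define m where "m = real (card G)"
  define a where "a = max_norm n1 n2 A"
  define F where "F = frob_norm n1 n2 A"
  define L where "L = mat_inner n1 n2 M A"
  define h where "h = (\<lambda>x. c * M (fst x) (snd x) * A (fst x) (snd x))"
  define k where "k = (\<lambda>x. c * A (fst x) (snd x))"
  define S where "S = (\<lambda>\<omega> :: nat \<times> (nat \<Rightarrow> (nat \<times> nat) \<times> real). \<Sum>l<fst \<omega>. gfun n1 n2 h k (snd \<omega> l))"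
  define V where "V = (exp 1 - 1) * (1 + \<zeta>)\<^sup>2 * c * F\<^sup>2"
  define b where "b = 2 * (1 + \<zeta>) * c * a"
  define t where "t = 2 * (\<zeta> + 1) * (sqrt (exp 1 - 1) * F * sqrt (c * u) + a * c * u)"
  have finG: "finite G" and neG: "G \<noteq> {}" using n by (auto simp: G_def grid_def)
  have m: "m = real n1 * real n2" by (simp add: m_def G_def card_grid)
  have mpos: "m > 0" using n by (simp add: m)
  have cpos: "c > 0" using n N by (simp add: c_def)
  have Nmc: "N / m * c = 1" using N n by (simp add: m c_def)
  have e1: "exp 1 - 1 > (0::real)" using exp1_ge by simp
  have Wid: "mat_inner n1 n2 (\<lambda>i j. Yobs N n1 n2 M \<omega> i j - M i j) A = S \<omega> - L" for \<omega>
    unfolding S_def L_def h_def k_def c_def by (rule W_identity)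
  have fimg: "finite ((\<lambda>(i, j). \<bar>A i j\<bar>) ` G)" using finG by simp
  have aG: "\<bar>A (fst x) (snd x)\<bar> \<le> a" if "x \<in> G" for x
  proof -
    have "(\<lambda>(i, j). \<bar>A i j\<bar>) x \<in> (\<lambda>(i, j). \<bar>A i j\<bar>) ` G" using that by blast
    then show ?thesis unfolding a_def max_norm_def G_def[symmetric]
      using Max_ge[OF fimg] by (simp add: case_prod_unfold)
  qed
  have "a \<in> (\<lambda>(i, j). \<bar>A i j\<bar>) ` G" unfolding a_def max_norm_def G_def[symmetric]
    using fimg neG by (intro Max_in) auto
  then obtain x0 where x0: "x0 \<in> G" "a = \<bar>A (fst x0) (snd x0)\<bar>" by (auto simp: case_prod_unfold)
  have apos: "a > 0" using a by (simp add: a_def)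
  have F2: "F\<^sup>2 = (\<Sum>x\<in>G. (A (fst x) (snd x))\<^sup>2)"
    unfolding F_def frob_norm_def G_def[symmetric] by (simp add: case_prod_unfold sum_nonneg)
  have "a\<^sup>2 \<le> F\<^sup>2" unfolding F2 x0(2) power2_abs
    using finG x0(1) by (intro member_le_sum) auto
  moreover have "a\<^sup>2 > 0" using apos by simp
  ultimately have Fpos: "F\<^sup>2 > 0" by linarith
  have Vpos: "V > 0" unfolding V_def using e1 z cpos Fpos by (intro mult_pos_pos) auto
  have bpos: "b > 0" unfolding b_def using z cpos apos by auto
  obtain s where s0: "s > 0" and s1: "s \<le> 1 / b" and sV: "s\<^sup>2 * V - s * (2 * sqrt (V * u) + b * u) \<le> - u"
    using chernoff_choice[OF Vpos bpos u] by blast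
  have F0: "F \<ge> 0" unfolding F_def frob_norm_def by (intro real_sqrt_ge_zero sum_nonneg) (auto simp: case_prod_unfold)
  have "V * u = ((1 + \<zeta>) * F)\<^sup>2 * ((exp 1 - 1) * (c * u))" by (simp add: V_def power_mult_distrib)
  then have "sqrt (V * u) = sqrt (((1 + \<zeta>) * F)\<^sup>2) * sqrt ((exp 1 - 1) * (c * u))"
    by (simp only: real_sqrt_mult)
  also have "sqrt (((1 + \<zeta>) * F)\<^sup>2) = (1 + \<zeta>) * F" using z F0 by simp
  also have "sqrt ((exp 1 - 1) * (c * u)) = sqrt (exp 1 - 1) * sqrt (c * u)" by (rule real_sqrt_mult)
  finally have "sqrt (V * u) = (1 + \<zeta>) * F * (sqrt (exp 1 - 1) * sqrt (c * u))" .
  then have tt: "t = 2 * sqrt (V * u) + b * u" by (simp add: t_def b_def algebra_simps)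
  have sb: "s * c * a * (1 + \<zeta>) \<le> 1/2"
  proof -
    have "s * b \<le> 1" using s1 bpos by (simp add: field_simps)
    then show ?thesis by (simp add: b_def algebra_simps)
  qed
  have skx: "\<bar>s * k x\<bar> * (1 + \<zeta>) \<le> 1/2" if "x \<in> G" for x
  proof -
    have "\<bar>s * k x\<bar> = s * c * \<bar>A (fst x) (snd x)\<bar>" using s0 cpos by (simp add: k_def abs_mult)
    also have "\<dots> \<le> s * c * a" using aG[OF that] s0 cpos by (intro mult_left_mono) auto
    finally have "\<bar>s * k x\<bar> * (1 + \<zeta>) \<le> s * c * a * (1 + \<zeta>)"
      using z by (intro mult_right_mono) auto
    then show ?thesis using sb by linarith
  qed
  have skz: "\<bar>s * k x\<bar> \<le> 1 / \<zeta>" if "x \<in> G" for x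
  proof -
    have "\<bar>s * k x\<bar> * (1 + \<zeta>) \<le> 1" using skx[OF that] by simp
    moreover have "\<bar>s * k x\<bar> * \<zeta> \<le> \<bar>s * k x\<bar> * (1 + \<zeta>)" by (intro mult_left_mono) auto
    ultimately show ?thesis using z by (simp add: field_simps)
  qed
  define \<phi> where "\<phi> = (\<Sum>x\<in>G. exp (s * h x + \<zeta>\<^sup>2 * (s * k x)\<^sup>2)) / m"
  have mgf: "(\<integral>\<^sup>+ \<omega>. ennreal (exp (s * S \<omega>)) \<partial>\<Omega>) \<le> ennreal (exp (N * (\<phi> - 1)))"
    unfolding S_def \<Omega>_def \<phi>_def m_def G_def
    by (rule mgf_total[OF N z n noise]) (use skz in \<open>simp add: G_def\<close>)
  have pw: "exp (s * h x + \<zeta>\<^sup>2 * (s * k x)\<^sup>2) - 1 - s * h x \<le> (exp 1 - 1) * (1 + \<zeta>)\<^sup>2 * (s * k x)\<^sup>2"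
    if x: "x \<in> G" for x
  proof -
    have mu: "\<bar>M (fst x) (snd x)\<bar> \<le> 1" using Mr[of "fst x" "snd x"] x by (auto simp: G_def)
    have e: "s * h x = M (fst x) (snd x) * (s * k x)" by (simp add: h_def k_def)
    show ?thesis unfolding e by (rule pw_bound[OF mu z skx[OF x]])
  qed
  have Lsum: "L = (\<Sum>x\<in>G. M (fst x) (snd x) * A (fst x) (snd x))"
    by (simp add: L_def mat_inner_def G_def case_prod_unfold)
  have hsum: "(\<Sum>x\<in>G. s * h x) = s * c * L" by (simp add: Lsum h_def sum_distrib_left algebra_simps)
  have ksum: "(\<Sum>x\<in>G. (s * k x)\<^sup>2) = s\<^sup>2 * c\<^sup>2 * F\<^sup>2"
    by (simp add: F2 k_def sum_distrib_left power_mult_distrib algebra_simps)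
  have "N * (\<phi> - 1) - s * L = N / m * (\<Sum>x\<in>G. exp (s * h x + \<zeta>\<^sup>2 * (s * k x)\<^sup>2) - 1 - s * h x)"
  proof -
    have "(\<Sum>x\<in>G. exp (s * h x + \<zeta>\<^sup>2 * (s * k x)\<^sup>2) - 1 - s * h x)
        = (\<Sum>x\<in>G. exp (s * h x + \<zeta>\<^sup>2 * (s * k x)\<^sup>2)) - m - s * c * L"
      by (simp add: sum_subtractf hsum m_def)
    moreover define E where "E = (\<Sum>x\<in>G. exp (s * h x + \<zeta>\<^sup>2 * (s * k x)\<^sup>2))"
    ultimately have R: "(\<Sum>x\<in>G. exp (s * h x + \<zeta>\<^sup>2 * (s * k x)\<^sup>2) - 1 - s * h x) = E - m - s * c * L"
      by simp
    have "N / m * (E - m - s * c * L) = N * (E / m) - N * (m / m) - (N / m * c) * s * L"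
      by (simp add: algebra_simps)
    also have "\<dots> = N * (E / m - 1) - s * L" unfolding Nmc using mpos by (simp add: right_diff_distrib)
    finally show ?thesis unfolding R \<phi>_def E_def[symmetric] by simp
  qed
  also have "\<dots> \<le> N / m * (\<Sum>x\<in>G. (exp 1 - 1) * (1 + \<zeta>)\<^sup>2 * (s * k x)\<^sup>2)"
    using N mpos by (intro mult_left_mono sum_mono pw) auto
  also have "\<dots> = N / m * ((exp 1 - 1) * (1 + \<zeta>)\<^sup>2 * (s\<^sup>2 * c\<^sup>2 * F\<^sup>2))"
    by (simp only: sum_distrib_left[symmetric] ksum)
  also have "\<dots> = (N / m * c) * ((exp 1 - 1) * (1 + \<zeta>)\<^sup>2 * s\<^sup>2 * c * F\<^sup>2)"
    by (simp add: power2_eq_square algebra_simps)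
  also have "\<dots> = s\<^sup>2 * V" unfolding Nmc by (simp add: V_def algebra_simps)
  finally have key: "N * (\<phi> - 1) - s * L \<le> s\<^sup>2 * V" .
  have expo: "- (s * (t + L)) + N * (\<phi> - 1) \<le> - u"
    using key sV tt by (simp add: algebra_simps)
  have Smeas: "S \<in> borel_measurable \<Omega>"
    unfolding S_def \<Omega>_def by (rule W_meas) (use noise in \<open>simp add: noise_ok_def\<close>)
  interpret prob_space \<Omega>
  proof -
    have "prob_space (PiM UNIV (\<lambda>l. measure_pmf (pmf_of_set (grid n1 n2)) \<Otimes>\<^sub>M D l))"
      using noise by (intro prob_space_PiM prob_space_pair) (simp_all add: prob_space_measure_pmf noise_ok_def)
    then show "prob_space \<Omega>" unfolding \<Omega>_def obs_space_def
      by (intro prob_space_pair) (simp_all add: prob_space_measure_pmf)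
  qed
  have seteq: "{\<omega> \<in> space \<Omega>. t \<le> mat_inner n1 n2 (\<lambda>i j. Yobs N n1 n2 M \<omega> i j - M i j) A}
      = {\<omega> \<in> space \<Omega>. 1 \<le> ennreal (exp (- (s * (t + L)))) * ennreal (exp (s * S \<omega>))}"
  proof -
    have "1 \<le> ennreal (exp (- (s * (t + L)))) * ennreal (exp (s * S \<omega>)) \<longleftrightarrow> t \<le> S \<omega> - L" for \<omega>
    proof -
      have "ennreal (exp (- (s * (t + L)))) * ennreal (exp (s * S \<omega>)) = ennreal (exp (s * (S \<omega> - L - t)))"
        by (simp add: ennreal_mult[symmetric] exp_add[symmetric] algebra_simps)
      moreover have "1 \<le> exp (s * (S \<omega> - L - t)) \<longleftrightarrow> t \<le> S \<omega> - L"
        using s0 by (simp add: zero_le_mult_iff)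
      ultimately show ?thesis by (simp add: ennreal_ge_1)
    qed
    then show ?thesis by (simp add: Wid)
  qed
  have "emeasure \<Omega> {\<omega> \<in> space \<Omega>. 1 \<le> ennreal (exp (- (s * (t + L)))) * ennreal (exp (s * S \<omega>))}
      \<le> ennreal (exp (- (s * (t + L)))) * (\<integral>\<^sup>+ \<omega>. ennreal (exp (s * S \<omega>)) * indicator (space \<Omega>) \<omega> \<partial>\<Omega>)"
    by (rule nn_integral_Markov_inequality) (use Smeas in measurable)
  also have "(\<integral>\<^sup>+ \<omega>. ennreal (exp (s * S \<omega>)) * indicator (space \<Omega>) \<omega> \<partial>\<Omega>) = (\<integral>\<^sup>+ \<omega>. ennreal (exp (s * S \<omega>)) \<partial>\<Omega>)"
    by (intro nn_integral_cong) simp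
  also have "ennreal (exp (- (s * (t + L)))) * (\<integral>\<^sup>+ \<omega>. ennreal (exp (s * S \<omega>)) \<partial>\<Omega>)
      \<le> ennreal (exp (- (s * (t + L)))) * ennreal (exp (N * (\<phi> - 1)))"
    by (intro mult_left_mono mgf) simp
  also have "\<dots> = ennreal (exp (- (s * (t + L)) + N * (\<phi> - 1)))"
    by (simp add: ennreal_mult[symmetric] flip: exp_add)
  also have "\<dots> \<le> ennreal (exp (- u))" using expo by (intro ennreal_leI) simp
  finally have "emeasure \<Omega> {\<omega> \<in> space \<Omega>. t \<le> mat_inner n1 n2 (\<lambda>i j. Yobs N n1 n2 M \<omega> i j - M i j) A}
      \<le> ennreal (exp (- u))" unfolding seteq .
  then have "measure \<Omega> {\<omega> \<in> space \<Omega>. t \<le> mat_inner n1 n2 (\<lambda>i j. Yobs N n1 n2 M \<omega> i j - M i j) A} \<le> exp (- u)"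
    by (simp add: emeasure_eq_measure)
  then show ?thesis unfolding \<Omega>_def t_def F_def a_def c_def by (simp add: algebra_simps)
qed

lemma two_sided:
  fixes N \<zeta> :: real and n1 n2 :: nat and M :: "nat \<Rightarrow> nat \<Rightarrow> real" and D :: "nat \<Rightarrow> real measure"
    and A :: "nat \<Rightarrow> nat \<Rightarrow> real" and u t :: real
  assumes N: "N > 0" and z: "\<zeta> > 0" and n: "n1 > 0" "n2 > 0"
    and Mr: "\<And>i j. (i, j) \<in> grid n1 n2 \<Longrightarrow> M i j \<in> {0..1}"
    and noise: "\<And>l. noise_ok \<zeta> (D l)"
    and u: "u > 0" and a: "max_norm n1 n2 A > 0"
    and t: "t \<ge> 2 * (\<zeta> + 1) * (sqrt (exp 1 - 1) * frob_norm n1 n2 A * sqrt (real n1 * real n2 / N * u)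
           + max_norm n1 n2 A * (real n1 * real n2 / N) * u)"
  shows "measure (obs_space N n1 n2 D)
     {\<omega> \<in> space (obs_space N n1 n2 D). \<bar>mat_inner n1 n2 (\<lambda>i j. Yobs N n1 n2 M \<omega> i j - M i j) A\<bar> \<le> t}
     \<ge> 1 - 2 * exp (- u)"
proof -
  define \<Omega> where "\<Omega> = obs_space N n1 n2 D"
  define W where "W = (\<lambda>\<omega>. mat_inner n1 n2 (\<lambda>i j. Yobs N n1 n2 M \<omega> i j - M i j) A)"
  define t0 where "t0 = 2 * (\<zeta> + 1) * (sqrt (exp 1 - 1) * frob_norm n1 n2 A * sqrt (real n1 * real n2 / N * u)
           + max_norm n1 n2 A * (real n1 * real n2 / N) * u)"
  let ?B = "\<lambda>i j. - A i j"
  have mB: "max_norm n1 n2 ?B = max_norm n1 n2 A" by (simp add: max_norm_def)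
  have fB: "frob_norm n1 n2 ?B = frob_norm n1 n2 A" by (simp add: frob_norm_def)
  have WB: "mat_inner n1 n2 X ?B = - mat_inner n1 n2 X A" for X
    by (simp add: mat_inner_def case_prod_unfold sum_negf)
  interpret prob_space \<Omega>
  proof -
    have "prob_space (PiM UNIV (\<lambda>l. measure_pmf (pmf_of_set (grid n1 n2)) \<Otimes>\<^sub>M D l))"
      using noise by (intro prob_space_PiM prob_space_pair) (simp_all add: prob_space_measure_pmf noise_ok_def)
    then show "prob_space \<Omega>" unfolding \<Omega>_def obs_space_def
      by (intro prob_space_pair) (simp_all add: prob_space_measure_pmf)
  qed
  have sD: "\<And>l. sets (D l) = sets borel" using noise by (simp add: noise_ok_def)
  have Wm[measurable]: "W \<in> borel_measurable \<Omega>"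
  proof -
    have "W = (\<lambda>\<omega>. (\<Sum>l<fst \<omega>. gfun n1 n2 (\<lambda>x. (real n1 * real n2 / N) * M (fst x) (snd x) * A (fst x) (snd x))
        (\<lambda>x. (real n1 * real n2 / N) * A (fst x) (snd x)) (snd \<omega> l)) - mat_inner n1 n2 M A)"
      unfolding W_def by (rule ext) (rule W_identity)
    moreover have "(\<lambda>\<omega>. (\<Sum>l<fst \<omega>. gfun n1 n2 (\<lambda>x. (real n1 * real n2 / N) * M (fst x) (snd x) * A (fst x) (snd x))
        (\<lambda>x. (real n1 * real n2 / N) * A (fst x) (snd x)) (snd \<omega> l))) \<in> borel_measurable \<Omega>"
      unfolding \<Omega>_def by (rule W_meas[OF sD])
    ultimately show ?thesis by simp
  qed
  have b1: "measure \<Omega> {\<omega> \<in> space \<Omega>. t0 \<le> W \<omega>} \<le> exp (- u)"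
    unfolding \<Omega>_def W_def t0_def by (rule tail_one[OF N z n Mr noise u a])
  have b2: "measure \<Omega> {\<omega> \<in> space \<Omega>. t0 \<le> - W \<omega>} \<le> exp (- u)"
    using tail_one[OF N z n Mr noise u, where A = ?B] a unfolding mB fB WB
    by (simp add: \<Omega>_def W_def t0_def)
  have s1: "{\<omega> \<in> space \<Omega>. t0 \<le> W \<omega>} \<in> sets \<Omega>" by measurable
  have s2: "{\<omega> \<in> space \<Omega>. t0 \<le> - W \<omega>} \<in> sets \<Omega>" by measurable
  have sg: "{\<omega> \<in> space \<Omega>. \<bar>W \<omega>\<bar> \<le> t} \<in> sets \<Omega>" by measurable
  have sub: "space \<Omega> - {\<omega> \<in> space \<Omega>. \<bar>W \<omega>\<bar> \<le> t} \<subseteq> {\<omega> \<in> space \<Omega>. t0 \<le> W \<omega>} \<union> {\<omega> \<in> space \<Omega>. t0 \<le> - W \<omega>}"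
    using t unfolding t0_def[symmetric] by auto
  have "prob (space \<Omega> - {\<omega> \<in> space \<Omega>. \<bar>W \<omega>\<bar> \<le> t}) \<le> prob ({\<omega> \<in> space \<Omega>. t0 \<le> W \<omega>} \<union> {\<omega> \<in> space \<Omega>. t0 \<le> - W \<omega>})"
    using sub s1 s2 by (intro finite_measure_mono) auto
  also have "\<dots> \<le> prob {\<omega> \<in> space \<Omega>. t0 \<le> W \<omega>} + prob {\<omega> \<in> space \<Omega>. t0 \<le> - W \<omega>}"
    using s1 s2 by (intro measure_subadditive) auto
  finally have "prob (space \<Omega> - {\<omega> \<in> space \<Omega>. \<bar>W \<omega>\<bar> \<le> t}) \<le> 2 * exp (- u)" using b1 b2 by simp
  moreover have "prob (space \<Omega> - {\<omega> \<in> space \<Omega>. \<bar>W \<omega>\<bar> \<le> t}) = 1 - prob {\<omega> \<in> space \<Omega>. \<bar>W \<omega>\<bar> \<le> t}"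
    using sg by (rule prob_compl)
  ultimately show ?thesis unfolding \<Omega>_def W_def by simp
qed

lemma max_norm_nonneg:
  assumes "n1 > 0" "n2 > 0"
  shows "max_norm n1 n2 A \<ge> 0 \<and> (\<forall>x\<in>grid n1 n2. \<bar>A (fst x) (snd x)\<bar> \<le> max_norm n1 n2 A)"
proof -
  have fin: "finite ((\<lambda>(i, j). \<bar>A i j\<bar>) ` grid n1 n2)" by (simp add: finite_grid)
  have ne: "grid n1 n2 \<noteq> {}" using assms by (auto simp: grid_def)
  have ge: "\<bar>A (fst x) (snd x)\<bar> \<le> max_norm n1 n2 A" if "x \<in> grid n1 n2" for x
  proof -
    have "(\<lambda>(i, j). \<bar>A i j\<bar>) x \<in> (\<lambda>(i, j). \<bar>A i j\<bar>) ` grid n1 n2" using that by blast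
    then show ?thesis unfolding max_norm_def using Max_ge[OF fin] by (simp add: case_prod_unfold)
  qed
  obtain x where "x \<in> grid n1 n2" using ne by blast
  then show ?thesis using ge[of x] by (auto intro: order_trans[OF abs_ge_zero] ge)
qed

theorem lemma1:
  fixes N \<zeta> :: real and n1 n2 :: nat
    and Mstar :: "nat \<Rightarrow> nat \<Rightarrow> real" and D :: "nat \<Rightarrow> real measure"
  assumes N_pos: "N > 0" and zeta_pos: "\<zeta> > 0"
    and n1_pos: "n1 > 0" and n2_pos: "n2 > 0"
    and Mstar_range: "\<And>i j. (i, j) \<in> grid n1 n2 \<Longrightarrow> Mstar i j \<in> {0..1}"
    and noise: "\<And>l. noise_ok \<zeta> (D l)"
  shows
    "(\<forall>(A :: nat \<Rightarrow> nat \<Rightarrow> real) (u :: real). u \<ge> 0 \<longrightarrow>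
        measure (obs_space N n1 n2 D)
          {\<omega> \<in> space (obs_space N n1 n2 D).
             \<bar>mat_inner n1 n2 (\<lambda>i j. Yobs N n1 n2 Mstar \<omega> i j - Mstar i j) A\<bar>
             \<le> 2 * (\<zeta> + 1) *
                (sqrt (exp 1 - 1) * frob_norm n1 n2 A * sqrt (real n1 * real n2 / N * u)
                 + max_norm n1 n2 A * (real n1 * real n2 / N) * u)}
        \<ge> 1 - 4 * exp (- u))
     \<and>
     (\<forall>S. S \<subseteq> grid n1 n2 \<longrightarrow> S \<noteq> {} \<longrightarrow>
        measure (obs_space N n1 n2 D)
          {\<omega> \<in> space (obs_space N n1 n2 D).
             \<bar>\<Sum>(i,j)\<in>S. Yobs N n1 n2 Mstar \<omega> i j - Mstar i j\<bar>
             \<le> 8 * (\<zeta> + 1) *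
                (sqrt (real (card S) * real n1 * real n2 / N * ln (real n1 * real n2))
                 + real n1 * real n2 / N * ln (real n1 * real n2))}
        \<ge> 1 - 4 * (real n1 * real n2) powr (-4))"
proof -
  define \<Omega> where "\<Omega> = obs_space N n1 n2 D"
  interpret prob_space \<Omega>
  proof -
    have "prob_space (PiM UNIV (\<lambda>l. measure_pmf (pmf_of_set (grid n1 n2)) \<Otimes>\<^sub>M D l))"
      using noise by (intro prob_space_PiM prob_space_pair) (simp_all add: prob_space_measure_pmf noise_ok_def)
    then show "prob_space \<Omega>" unfolding \<Omega>_def obs_space_def
      by (intro prob_space_pair) (simp_all add: prob_space_measure_pmf)
  qed
  have e3: "exp 1 \<le> (3::real)" by (rule exp_le)
  have e1: "exp 1 - 1 \<ge> (0::real)" using exp1_ge by simp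
  have cpos: "real n1 * real n2 / N > 0" using N_pos n1_pos n2_pos by simp
  have P1: "measure \<Omega>
          {\<omega> \<in> space \<Omega>.
             \<bar>mat_inner n1 n2 (\<lambda>i j. Yobs N n1 n2 Mstar \<omega> i j - Mstar i j) A\<bar>
             \<le> 2 * (\<zeta> + 1) *
                (sqrt (exp 1 - 1) * frob_norm n1 n2 A * sqrt (real n1 * real n2 / N * u)
                 + max_norm n1 n2 A * (real n1 * real n2 / N) * u)}
        \<ge> 1 - 4 * exp (- u)" if u: "u \<ge> 0" for A u
  proof (cases "u > 0 \<and> max_norm n1 n2 A > 0")
    case True
    have "measure \<Omega>
          {\<omega> \<in> space \<Omega>.
             \<bar>mat_inner n1 n2 (\<lambda>i j. Yobs N n1 n2 Mstar \<omega> i j - Mstar i j) A\<bar>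
             \<le> 2 * (\<zeta> + 1) *
                (sqrt (exp 1 - 1) * frob_norm n1 n2 A * sqrt (real n1 * real n2 / N * u)
                 + max_norm n1 n2 A * (real n1 * real n2 / N) * u)} \<ge> 1 - 2 * exp (- u)"
      unfolding \<Omega>_def using True
      by (intro two_sided[OF N_pos zeta_pos n1_pos n2_pos Mstar_range noise]) auto
    moreover have "exp (- u) \<ge> 0" by simp
    ultimately show ?thesis by linarith
  next
    case False
    show ?thesis
    proof (cases "u = 0")
      case True
      then show ?thesis by (intro order_trans[OF _ measure_nonneg]) simp
    next
      case False2: False
      with u False have mz: "max_norm n1 n2 A \<le> 0" by auto
      have mn: "max_norm n1 n2 A \<ge> 0 \<and> (\<forall>x\<in>grid n1 n2. \<bar>A (fst x) (snd x)\<bar> \<le> max_norm n1 n2 A)"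
        by (rule max_norm_nonneg[OF n1_pos n2_pos])
      then have m0: "max_norm n1 n2 A = 0" using mz by simp
      have A0: "A i j = 0" if "(i, j) \<in> grid n1 n2" for i j
        using mn m0 that by fastforce
      have inner0: "mat_inner n1 n2 X A = 0" for X
        unfolding mat_inner_def by (intro sum.neutral) (auto simp: A0)
      have F0: "frob_norm n1 n2 A \<ge> 0" unfolding frob_norm_def
        by (intro real_sqrt_ge_zero sum_nonneg) (auto simp: case_prod_unfold)
      have "0 \<le> 2 * (\<zeta> + 1) * (sqrt (exp 1 - 1) * frob_norm n1 n2 A * sqrt (real n1 * real n2 / N * u)
                 + max_norm n1 n2 A * (real n1 * real n2 / N) * u)"
      proof -
        have "0 \<le> sqrt (exp 1 - 1) * frob_norm n1 n2 A * sqrt (real n1 * real n2 / N * u)"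
          using F0 e1 cpos u N_pos by (intro mult_nonneg_nonneg) auto
        then show ?thesis using zeta_pos m0 by simp
      qed
      then have "{\<omega> \<in> space \<Omega>.
             \<bar>mat_inner n1 n2 (\<lambda>i j. Yobs N n1 n2 Mstar \<omega> i j - Mstar i j) A\<bar>
             \<le> 2 * (\<zeta> + 1) *
                (sqrt (exp 1 - 1) * frob_norm n1 n2 A * sqrt (real n1 * real n2 / N * u)
                 + max_norm n1 n2 A * (real n1 * real n2 / N) * u)} = space \<Omega>"
        by (auto simp: inner0)
      moreover have "exp (- u) \<ge> 0" by simp
      ultimately show ?thesis using prob_space by simp
    qed
  qed
  have P2: "measure \<Omega>
          {\<omega> \<in> space \<Omega>.
             \<bar>\<Sum>(i,j)\<in>S. Yobs N n1 n2 Mstar \<omega> i j - Mstar i j\<bar>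
             \<le> 8 * (\<zeta> + 1) *
                (sqrt (real (card S) * real n1 * real n2 / N * ln (real n1 * real n2))
                 + real n1 * real n2 / N * ln (real n1 * real n2))}
        \<ge> 1 - 4 * (real n1 * real n2) powr (-4)" if S: "S \<subseteq> grid n1 n2" "S \<noteq> {}" for S
  proof -
    define m where "m = real n1 * real n2"
    define c where "c = real n1 * real n2 / N"
    define T where "T = 8 * (\<zeta> + 1) *
                (sqrt (real (card S) * real n1 * real n2 / N * ln (real n1 * real n2))
                 + real n1 * real n2 / N * ln (real n1 * real n2))"
    have m1: "m \<ge> 1"
    proof -
      have "1 \<le> n1 * n2" using n1_pos n2_pos by (simp add: Suc_le_eq)
      then have "(1::real) \<le> real (n1 * n2)" by (simp only: of_nat_le_iff[symmetric] of_nat_1)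
      then show ?thesis by (simp add: m_def)
    qed
    show ?thesis
    proof (cases "m = 1")
      case True
      then show ?thesis by (intro order_trans[OF _ measure_nonneg]) (simp add: m_def)
    next
      case False
      then have m2: "m > 1" using m1 by simp
      define u where "u = 4 * ln m"
      have upos: "u > 0" using m2 by (simp add: u_def)
      define A where "A = (\<lambda>i j. if (i, j) \<in> S then 1 else (0::real))"
      have finG: "finite (grid n1 n2)" by (rule finite_grid)
      have finS: "finite S" using S(1) finG by (rule finite_subset)
      have GS: "grid n1 n2 \<inter> S = S" using S by auto
      have innerS: "mat_inner n1 n2 X A = (\<Sum>(i,j)\<in>S. X i j)" for X
      proof -
        have "mat_inner n1 n2 X A = (\<Sum>x\<in>grid n1 n2. if x \<in> S then X (fst x) (snd x) else 0)"
          unfolding mat_inner_def A_def by (intro sum.cong) (auto simp: case_prod_unfold)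
        also have "\<dots> = (\<Sum>x\<in>grid n1 n2 \<inter> S. X (fst x) (snd x))"
          using finG by (simp add: sum.inter_restrict)
        finally show ?thesis unfolding GS by (simp add: case_prod_unfold)
      qed
      have frobS: "frob_norm n1 n2 A = sqrt (real (card S))"
      proof -
        have "(\<Sum>(i, j)\<in>grid n1 n2. (A i j)\<^sup>2) = (\<Sum>x\<in>grid n1 n2. if x \<in> S then 1 else 0)"
          unfolding A_def by (intro sum.cong) (auto simp: case_prod_unfold)
        also have "\<dots> = (\<Sum>x\<in>grid n1 n2 \<inter> S. 1)"
          using finG by (rule sum.inter_restrict[symmetric])
        finally show ?thesis unfolding frob_norm_def GS by simp
      qed
      have maxS: "max_norm n1 n2 A = 1"
        unfolding max_norm_def
      proof (rule Max_eqI)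
        show "finite ((\<lambda>(i, j). \<bar>A i j\<bar>) ` grid n1 n2)" using finG by simp
        show "y \<le> 1" if "y \<in> (\<lambda>(i, j). \<bar>A i j\<bar>) ` grid n1 n2" for y
          using that by (auto simp: A_def)
        obtain x where "x \<in> S" using S by blast
        then show "1 \<in> (\<lambda>(i, j). \<bar>A i j\<bar>) ` grid n1 n2"
          using S by (intro image_eqI[of _ _ x]) (auto simp: A_def case_prod_unfold)
      qed
      have lnm: "ln m \<ge> 0" using m1 by simp
      have apos: "max_norm n1 n2 A > 0" using maxS by simp
      have sq: "sqrt (real (card S)) * sqrt (c * u) = 2 * sqrt (real (card S) * c * ln m)"
      proof -
        have "sqrt (real (card S)) * sqrt (c * u) = sqrt (4 * (real (card S) * c * ln m))"
          by (simp add: real_sqrt_mult[symmetric] u_def algebra_simps)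
        also have "\<dots> = 2 * sqrt (real (card S) * c * ln m)" by (simp add: real_sqrt_mult)
        finally show ?thesis .
      qed
      have se: "sqrt (exp 1 - 1) \<le> 2"
      proof -
        have "sqrt (exp 1 - 1) \<le> sqrt 4" using e3 by (intro real_sqrt_le_mono) simp
        then show ?thesis by simp
      qed
      have cp: "c > 0" using cpos by (simp add: c_def)
      have Q0: "sqrt (real (card S) * c * ln m) \<ge> 0" using cp lnm by (intro real_sqrt_ge_zero mult_nonneg_nonneg) auto
      have cl0: "c * ln m \<ge> 0" using cp lnm by simp
      have tle: "2 * (\<zeta> + 1) * (sqrt (exp 1 - 1) * frob_norm n1 n2 A * sqrt (real n1 * real n2 / N * u)
           + max_norm n1 n2 A * (real n1 * real n2 / N) * u) \<le> T"
      proof -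
        have "2 * (\<zeta> + 1) * (sqrt (exp 1 - 1) * frob_norm n1 n2 A * sqrt (real n1 * real n2 / N * u)
           + max_norm n1 n2 A * (real n1 * real n2 / N) * u)
           = 2 * (\<zeta> + 1) * (sqrt (exp 1 - 1) * (2 * sqrt (real (card S) * c * ln m)) + 4 * (c * ln m))"
          unfolding frobS maxS c_def[symmetric] using sq by (simp add: u_def mult.assoc)
        also have "\<dots> \<le> 2 * (\<zeta> + 1) * (2 * (2 * sqrt (real (card S) * c * ln m)) + 4 * (c * ln m))"
          using zeta_pos se Q0 by (intro mult_left_mono add_right_mono mult_right_mono) auto
        also have "\<dots> = T" unfolding T_def c_def m_def by (simp add: algebra_simps)
        finally show ?thesis .
      qed
      have "measure \<Omega> {\<omega> \<in> space \<Omega>.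
             \<bar>mat_inner n1 n2 (\<lambda>i j. Yobs N n1 n2 Mstar \<omega> i j - Mstar i j) A\<bar> \<le> T} \<ge> 1 - 2 * exp (- u)"
        unfolding \<Omega>_def
        by (rule two_sided[OF N_pos zeta_pos n1_pos n2_pos Mstar_range noise upos apos tle])
      moreover have "exp (- u) = m powr (-4)" using m2 by (simp add: u_def powr_def)
      moreover have "m powr (-4) \<ge> 0" by simp
      ultimately have "measure \<Omega> {\<omega> \<in> space \<Omega>.
             \<bar>mat_inner n1 n2 (\<lambda>i j. Yobs N n1 n2 Mstar \<omega> i j - Mstar i j) A\<bar> \<le> T} \<ge> 1 - 4 * m powr (-4)"
        by linarith
      then show ?thesis unfolding innerS T_def m_def by simp
    qed
  qed
  show ?thesis using P1 P2 unfolding \<Omega>_def by blast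
qed

end
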